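(* Let $X$ be a finite simplicial complex with vertices labelled by $\{1,\dots,n\}$, let $d\ge0$, and let $\sigma$ be a symmetry of $X$. Suppose $F^{\uparrow}:C_{d+1}(X)\to C_{d+1}(X)$ is componentwise with every component given by the same odd function $\mathbb{R}\to\mathbb{R}$, and $F^{\downarrow}:C_{d-1}(X)\to C_{d-1}(X)$ is componentwise with every component given by the same odd function $\mathbb{R}\to\mathbb{R}$. Let $G^{\uparrow}=B_{d+1}F^{\uparrow}B_{d+1}^\intercal$ and $G^{\downarrow}=B_d^\intercal F^{\downarrow}B_d$, as maps $C_d(X)\to C_d(X)$. Then $$G^{\uparrow}\circ S^d_\sigma=S^d_\sigma\circ G^{\uparrow}\quad\text{and}\quad G^{\downarrow}\circ S^d_\sigma=S^d_\sigma\circ G^{\downarrow}.$$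
   Context: A finite simplicial complex $X$ on vertex set $\{1,\dots,n\}$ is a collection of nonempty subsets closed under taking nonempty subsets; $X_d$ is the set of simplices with $d+1$ vertices; a $d$-simplex with vertices $i_0<\dots<i_d$ is written $[i_0,\dots,i_d]$ and $A_s=\{i_0,\dots,i_d\}$. $C_d(X)$ is the real vector space with basis $X_d$ and inner product making $X_d$ orthonormal ($C_{-1}(X)=0$, $B_0=0$). The boundary map is $\partial_d[i_0,\dots,i_d]=\sum_{k=0}^d(-1)^k[i_0,\dots,\widehat{i_k},\dots,i_d]$ with matrix $B_d$ in the bases $X_d,X_{d-1}$. A symmetry of $X$ is a permutation $\sigma$ of $\{1,\dots,n\}$ such that for every simplex $s$ the set $\sigma(A_s)$ is again a simplex, denoted $\sigma(s)$. For $A=\{i_0<\dots<i_d\}$, $\operatorname{sgn}(A,\sigma)=\operatorname{sgn}(\tau)$ where $\tau$ is the unique permutation of $\{0,\dots,d\}$ with $\sigma(i_{\tau(0)})<\dots<\sigma(i_{\tau(d)})$. $S^d_\sigma:C_d(X)\to C_d(X)$ is the linear map with $S^d_\sigma(s)=\operatorname{sgn}(A_s,\sigma)\,\sigma(s)$ for $s\in X_d$. A map $F:C_D(X)\to C_D(X)$ is componentwise if $(F(x))_s$ depends only on $x_s$, i.e. $(F(x))_s=F_s(x_s)$. *)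

theory Defs
  imports Complex_Main "HOL-Combinatorics.Permutations"
begin

definition simplicial_complex :: "nat \<Rightarrow> nat set set \<Rightarrow> bool" where
  "simplicial_complex n X \<longleftrightarrow>
     (\<forall>s\<in>X. s \<noteq> {} \<and> s \<subseteq> {1..n}) \<and>
     (\<forall>i\<in>{1..n}. {i} \<in> X) \<and>
     (\<forall>s\<in>X. \<forall>t. t \<noteq> {} \<longrightarrow> t \<subseteq> s \<longrightarrow> t \<in> X)"

text \<open>Simplices with exactly k vertices (so X_d = cfaces X (d+1)).\<close>
definition cfaces :: "nat set set \<Rightarrow> nat \<Rightarrow> nat set set" where
  "cfaces X k = {s \<in> X. card s = k}"

definition chains :: "nat set set \<Rightarrow> nat \<Rightarrow> (nat set \<Rightarrow> real) set" where
  "chains X k = {x. \<forall>s. s \<notin> cfaces X k \<longrightarrow> x s = 0}"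

text \<open>Matrix entry of the boundary map at (t, s): (-1)^k if t = s with its k-th vertex
(counting from 0 in increasing order) removed, else 0.\<close>
definition bd_coeff :: "nat set \<Rightarrow> nat set \<Rightarrow> real" where
  "bd_coeff s t = (if t \<subseteq> s \<and> card s = Suc (card t)
      then (-1) ^ card {i \<in> s. i < the_elem (s - t)} else 0)"

text \<open>B_d : C_d \<rightarrow> C_{d-1} (C_{-1} = 0).\<close>
definition bd :: "nat set set \<Rightarrow> nat \<Rightarrow> (nat set \<Rightarrow> real) \<Rightarrow> (nat set \<Rightarrow> real)" where
  "bd X d x = (\<lambda>t. if t \<in> cfaces X d then (\<Sum>s\<in>cfaces X (d+1). bd_coeff s t * x s) else 0)"

definition bdT :: "nat set set \<Rightarrow> nat \<Rightarrow> (nat set \<Rightarrow> real) \<Rightarrow> (nat set \<Rightarrow> real)" where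
  "bdT X d y = (\<lambda>s. if s \<in> cfaces X (d+1) then (\<Sum>t\<in>cfaces X d. bd_coeff s t * y t) else 0)"

definition compwise :: "nat set set \<Rightarrow> nat \<Rightarrow> (real \<Rightarrow> real) \<Rightarrow> (nat set \<Rightarrow> real) \<Rightarrow> (nat set \<Rightarrow> real)" where
  "compwise X k f y = (\<lambda>s. if s \<in> cfaces X k then f (y s) else 0)"

definition symmetry :: "nat \<Rightarrow> nat set set \<Rightarrow> (nat \<Rightarrow> nat) \<Rightarrow> bool" where
  "symmetry n X \<sigma> \<longleftrightarrow> \<sigma> permutes {1..n} \<and> (\<forall>s\<in>X. \<sigma> ` s \<in> X)"

definition sgn_perm :: "nat set \<Rightarrow> (nat \<Rightarrow> nat) \<Rightarrow> real" where
  "sgn_perm A \<sigma> = (let l = sorted_list_of_set A;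
      \<tau> = (THE \<tau>. \<tau> permutes {..<card A} \<and>
                 strict_mono_on {..<card A} (\<lambda>k. \<sigma> (l ! (\<tau> k))))
    in of_int (sign \<tau>))"

definition S_map :: "nat set set \<Rightarrow> nat \<Rightarrow> (nat \<Rightarrow> nat) \<Rightarrow> (nat set \<Rightarrow> real) \<Rightarrow> (nat set \<Rightarrow> real)" where
  "S_map X d \<sigma> x = (\<lambda>t. \<Sum>s\<in>cfaces X (d+1). if \<sigma> ` s = t then sgn_perm s \<sigma> * x s else 0)"

definition G_up :: "nat set set \<Rightarrow> nat \<Rightarrow> (real \<Rightarrow> real) \<Rightarrow> (nat set \<Rightarrow> real) \<Rightarrow> (nat set \<Rightarrow> real)" where
  "G_up X d f x = bd X (d+1) (compwise X (d+2) f (bdT X (d+1) x))"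

definition G_down :: "nat set set \<Rightarrow> nat \<Rightarrow> (real \<Rightarrow> real) \<Rightarrow> (nat set \<Rightarrow> real) \<Rightarrow> (nat set \<Rightarrow> real)" where
  "G_down X d g x = bdT X d (compwise X d g (bd X d x))"

end

theory Submission
  imports Defs
begin

definition Pairs :: "nat set \<Rightarrow> (nat \<times> nat) set" where
  "Pairs A = {(i,j). i \<in> A \<and> j \<in> A \<and> i < j}"

definition epsP :: "(nat \<Rightarrow> nat) \<Rightarrow> nat set \<Rightarrow> real" where
  "epsP g A = (\<Prod>p\<in>Pairs A. if g (snd p) < g (fst p) then -1 else 1)"

lemma finite_Pairs: "finite A \<Longrightarrow> finite (Pairs A)"
  by (rule finite_subset[of _ "A \<times> A"]) (auto simp: Pairs_def)

lemma prod_pm1: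
  assumes "finite S"
  shows "(\<Prod>x\<in>S. if P x then -1 else (1::real)) = (-1) ^ card {x\<in>S. P x}"
proof -
  have "(\<Prod>x\<in>S. if P x then -1 else (1::real)) = (\<Prod>x\<in>S \<inter> {x. P x}. -1) * (\<Prod>x\<in>S \<inter> - {x. P x}. 1)"
    by (rule prod.If_cases[OF assms])
  also have "\<dots> = (-1) ^ card (S \<inter> {x. P x})" by simp
  also have "S \<inter> {x. P x} = {x\<in>S. P x}" by auto
  finally show ?thesis .
qed

lemma epsP_sq: "finite A \<Longrightarrow> epsP g A * epsP g A = 1"
  unfolding epsP_def
  by (simp add: prod_pm1 finite_Pairs flip: power_add)

lemma epsP_adj:
  assumes q: "q permutes {..<k}" and i: "Suc i < k"
  shows "epsP (Transposition.transpose i (Suc i) \<circ> q) {..<k} = - epsP q {..<k}"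
proof -
  define s where "s = Transposition.transpose i (Suc i)"
  define x0 where "x0 = inv q i"
  define y0 where "y0 = inv q (Suc i)"
  have qx0: "q x0 = i" and qy0: "q y0 = Suc i"
    using q unfolding x0_def y0_def by (simp_all add: permutes_inverses(1))
  have x0k: "x0 < k" and y0k: "y0 < k"
    using q i unfolding x0_def y0_def
    by (metis lessThan_iff less_trans lessI permutes_inv permutes_in_image)+
  have "x0 \<noteq> y0" using qx0 qy0 by auto
  define p0 where "p0 = (min x0 y0, max x0 y0)"
  have p0P: "p0 \<in> Pairs {..<k}" using x0k y0k \<open>x0 \<noteq> y0\<close> by (auto simp: p0_def Pairs_def)
  have fin: "finite (Pairs {..<k})" by (simp add: finite_Pairs)
  define F :: "(nat \<Rightarrow> nat) \<Rightarrow> nat \<times> nat \<Rightarrow> real" where "F = (\<lambda>g p. if g (snd p) < g (fst p) then -1 else (1::real))"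
  have injq: "inj q" using q permutes_inj by blast
  have eq: "F (s \<circ> q) p = F q p" if "p \<in> Pairs {..<k} - {p0}" for p
  proof -
    obtain a b where p: "p = (a,b)" by (cases p)
    have "a \<noteq> b" using that p by (auto simp: Pairs_def)
    have "\<not> ({a,b} = {x0,y0})" using that p by (auto simp: p0_def Pairs_def doubleton_eq_iff min_def max_def)
    have "\<not> ({q a, q b} = {i, Suc i})"
    proof
      assume "{q a, q b} = {i, Suc i}"
      hence "{q a, q b} = {q x0, q y0}" using qx0 qy0 by simp
      hence "{a,b} = {x0,y0}" using injq by (auto simp: doubleton_eq_iff inj_eq)
      thus False using \<open>\<not> ({a,b} = {x0,y0})\<close> by simp
    qed
    moreover have "q a \<noteq> q b" using injq \<open>a \<noteq> b\<close> by (simp add: inj_eq)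
    ultimately show ?thesis unfolding F_def p s_def
      by (auto simp: Transposition.transpose_def doubleton_eq_iff)
  qed
  have e0: "F (s \<circ> q) p0 = - F q p0"
    using qx0 qy0 unfolding F_def p0_def s_def
    by (cases "x0 < y0") (auto simp: Transposition.transpose_def min_def max_def)
  have ep: "epsP g {..<k} = prod (F g) (Pairs {..<k})" for g
    by (simp add: epsP_def F_def)
  have "epsP (s \<circ> q) {..<k} = F (s \<circ> q) p0 * (\<Prod>p\<in>Pairs {..<k} - {p0}. F (s \<circ> q) p)"
    unfolding ep by (rule prod.remove[OF fin p0P])
  also have "\<dots> = - F q p0 * (\<Prod>p\<in>Pairs {..<k} - {p0}. F q p)"
    using eq e0 by simp
  also have "\<dots> = - epsP q {..<k}"
    unfolding ep using prod.remove[OF fin p0P, of "F q"] by simp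
  finally show ?thesis unfolding s_def .
qed

lemma epsP_adj_list:
  assumes "q permutes {..<k}" "\<forall>x\<in>set xs. Suc x < k"
  shows "epsP (apply_adj_transps xs \<circ> q) {..<k} = (-1) ^ length xs * epsP q {..<k}"
  using assms(2)
proof (induction xs)
  case Nil
  then show ?case by simp
next
  case (Cons x xs)
  have pa: "apply_adj_transps xs permutes {..<k}"
    using Cons.prems by (intro permutes_apply_adj_transps) auto
  have "apply_adj_transps xs \<circ> q permutes {..<k}"
    by (rule permutes_compose[OF assms(1) pa])
  hence "epsP (Transposition.transpose x (Suc x) \<circ> (apply_adj_transps xs \<circ> q)) {..<k}
        = - epsP (apply_adj_transps xs \<circ> q) {..<k}"
    using Cons.prems by (intro epsP_adj) auto
  then show ?case using Cons by (simp add: o_assoc comp_def)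
qed

lemma sign_epsP:
  assumes "p permutes {..<k}"
  shows "real_of_int (sign p) = epsP p {..<k}"
  using assms finite_lessThan
proof (induction rule: permutes_induct)
  case id
  then show ?case by (auto simp: epsP_def Pairs_def intro!: prod.neutral)
next
  case (swap a b p)
  have key: "epsP (Transposition.transpose a b \<circ> p) {..<k} = - epsP p {..<k}"
    if "a < b" "b < k" for a b
  proof -
    have "epsP (Transposition.transpose a b \<circ> p) {..<k}
        = epsP (apply_adj_transps (adj_transp_seq a b) \<circ> p) {..<k}"
      using adj_transp_seq_correct[OF that(1)] by simp
    also have "\<dots> = (-1) ^ (2 * (b - a) - 1) * epsP p {..<k}"
      using epsP_adj_list[OF swap.hyps(4), of "adj_transp_seq a b"] that
      by (simp add: set_adj_transp_seq length_adj_transp_seq)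
    also have "(-1::real) ^ (2 * (b - a) - 1) = -1"
      using that by (intro neg_one_odd_power) simp
    finally show ?thesis by (simp add: comp_def)
  qed
  have "epsP (Transposition.transpose a b \<circ> p) {..<k} = - epsP p {..<k}"
    using swap.hyps key[of a b] key[of b a] by (cases "a < b") (auto simp: transpose_commute)
  moreover have "sign (Transposition.transpose a b \<circ> p) = - sign p"
    using swap.hyps by (subst sign_compose) (auto simp: permutation_swap_id sign_swap_id intro: permutes_imp_permutation)
  ultimately show ?case using swap.IH by (simp del: comp_apply)
qed


lemma prod_Pairs_reindex:
  assumes bij: "bij_betw \<phi> A B"
  shows "prod F (Pairs B) = (\<Prod>p\<in>Pairs A. F (min (\<phi> (fst p)) (\<phi> (snd p)), max (\<phi> (fst p)) (\<phi> (snd p))))"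
proof -
  define \<psi> where "\<psi> = inv_into A \<phi>"
  have i1: "\<psi> (\<phi> a) = a" if "a \<in> A" for a
    using bij that unfolding \<psi>_def by (simp add: bij_betw_inv_into_left)
  have i2: "\<phi> (\<psi> b) = b" if "b \<in> B" for b
    using bij that unfolding \<psi>_def by (simp add: bij_betw_inv_into_right)
  have m1: "\<phi> a \<in> B" if "a \<in> A" for a
    using bij that by (auto simp: bij_betw_def)
  have m2: "\<psi> b \<in> A" if "b \<in> B" for b
    using bij that unfolding \<psi>_def by (metis bij_betw_def inv_into_into)
  have inj1: "\<phi> a \<noteq> \<phi> a'" if "a \<in> A" "a' \<in> A" "a \<noteq> a'" for a a'
    using i1 that by metis
  have inj2: "\<psi> b \<noteq> \<psi> b'" if "b \<in> B" "b' \<in> B" "b \<noteq> b'" for b b'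
    using i2 that by metis
  show ?thesis
  proof (rule prod.reindex_bij_witness[symmetric,
        where j = "\<lambda>p. (min (\<phi> (fst p)) (\<phi> (snd p)), max (\<phi> (fst p)) (\<phi> (snd p)))"
          and i = "\<lambda>p. (min (\<psi> (fst p)) (\<psi> (snd p)), max (\<psi> (fst p)) (\<psi> (snd p)))"])
    fix p assume "p \<in> Pairs A"
    then obtain a b where p: "p = (a,b)" "a \<in> A" "b \<in> A" "a < b" by (auto simp: Pairs_def)
    show "(min (\<psi> (fst (min (\<phi> (fst p)) (\<phi> (snd p)), max (\<phi> (fst p)) (\<phi> (snd p)))))
             (\<psi> (snd (min (\<phi> (fst p)) (\<phi> (snd p)), max (\<phi> (fst p)) (\<phi> (snd p))))),
          max (\<psi> (fst (min (\<phi> (fst p)) (\<phi> (snd p)), max (\<phi> (fst p)) (\<phi> (snd p)))))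
             (\<psi> (snd (min (\<phi> (fst p)) (\<phi> (snd p)), max (\<phi> (fst p)) (\<phi> (snd p)))))) = p"
      using p i1 by (auto simp: min_def max_def)
    show "(min (\<phi> (fst p)) (\<phi> (snd p)), max (\<phi> (fst p)) (\<phi> (snd p))) \<in> Pairs B"
      using p m1 inj1[of a b] by (auto simp: Pairs_def min_def max_def)
  next
    fix p assume "p \<in> Pairs B"
    then obtain a b where p: "p = (a,b)" "a \<in> B" "b \<in> B" "a < b" by (auto simp: Pairs_def)
    show "(min (\<phi> (fst (min (\<psi> (fst p)) (\<psi> (snd p)), max (\<psi> (fst p)) (\<psi> (snd p)))))
             (\<phi> (snd (min (\<psi> (fst p)) (\<psi> (snd p)), max (\<psi> (fst p)) (\<psi> (snd p))))),
          max (\<phi> (fst (min (\<psi> (fst p)) (\<psi> (snd p)), max (\<psi> (fst p)) (\<psi> (snd p)))))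
             (\<phi> (snd (min (\<psi> (fst p)) (\<psi> (snd p)), max (\<psi> (fst p)) (\<psi> (snd p)))))) = p"
      using p i2 by (auto simp: min_def max_def)
    show "(min (\<psi> (fst p)) (\<psi> (snd p)), max (\<psi> (fst p)) (\<psi> (snd p))) \<in> Pairs A"
      using p m2 inj2[of a b] by (auto simp: Pairs_def min_def max_def)
  qed simp
qed


lemma strict_mono_on_lessThan_eq:
  fixes h :: "nat \<Rightarrow> nat"
  assumes "strict_mono_on {..<k} h" "h ` {..<k} = Y" "length m = k" "sorted_wrt (<) m" "set m = Y"
    "i < k"
  shows "h i = m ! i"
proof -
  have "sorted_wrt (<) (map h [0..<k])"
    unfolding sorted_wrt_iff_nth_less
  proof (intro allI impI)
    fix a b assume "a < b" "b < length (map h [0..<k])"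
    then show "map h [0..<k] ! a < map h [0..<k] ! b"
      using assms(1) by (simp add: strict_mono_onD)
  qed
  moreover have "set (map h [0..<k]) = set m"
  proof -
    have "set (map h [0..<k]) = h ` {..<k}" by (simp add: atLeast0LessThan)
    thus ?thesis using assms(2,5) by simp
  qed
  ultimately have "map h [0..<k] = m"
    by (rule strict_sorted_equal[OF assms(4)])
  hence "map h [0..<k] ! i = m ! i" by simp
  thus ?thesis using assms(6) by simp
qed

lemma sgn_perm_epsP:
  assumes finA: "finite A" and inj: "inj_on \<sigma> A"
  shows "sgn_perm A \<sigma> = epsP \<sigma> A"
proof -
  define k where "k = card A"
  define l where "l = sorted_list_of_set A"
  define g where "g = (\<lambda>i. \<sigma> (l ! i))"
  define Y where "Y = \<sigma> ` A"
  define m where "m = sorted_list_of_set Y"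
  have lenl: "length l = k" using finA by (simp add: l_def k_def)
  have sl: "sorted_wrt (<) l" "set l = A" using finA by (simp_all add: l_def strict_sorted_list_of_set)
  have dl: "distinct l" using sl strict_sorted_iff by blast
  have be: "bij_betw ((!) l) {..<k} A"
    by (rule bij_betw_nth) (use dl lenl sl in auto)
  have em: "l ! a < l ! b" if "a < b" "b < k" for a b
    using sl(1) that lenl by (auto simp: sorted_wrt_iff_nth_less)
  have bg: "bij_betw g {..<k} Y"
    unfolding g_def Y_def using bij_betw_trans[OF be inj_on_imp_bij_betw[OF inj]]
    by (simp add: comp_def)
  have finY: "finite Y" using finA by (simp add: Y_def)
  have cardY: "card Y = k" using bg by (metis bij_betw_same_card card_lessThan)
  have lenm: "length m = k" using finY cardY by (simp add: m_def)
  have sm: "sorted_wrt (<) m" "set m = Y" using finY by (simp_all add: m_def strict_sorted_list_of_set)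
  define \<tau>0 where "\<tau>0 = (\<lambda>i. if i < k then inv_into {..<k} g (m ! i) else i)"
  have mY: "m ! i \<in> Y" if "i < k" for i using sm lenm that by auto
  have g\<tau>0: "g (\<tau>0 i) = m ! i" if "i < k" for i
    using that mY[OF that] bg unfolding \<tau>0_def by (simp add: bij_betw_inv_into_right)
  have bm: "bij_betw ((!) m) {..<k} Y"
    by (rule bij_betw_nth) (use sm lenm strict_sorted_iff in auto)
  have "bij_betw (inv_into {..<k} g \<circ> (!) m) {..<k} {..<k}"
    by (rule bij_betw_trans[OF bm bij_betw_inv_into[OF bg]])
  hence "bij_betw \<tau>0 {..<k} {..<k}"
    by (rule bij_betw_cong[THEN iffD1, rotated]) (auto simp: \<tau>0_def)
  hence p0: "\<tau>0 permutes {..<k}"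
    by (rule bij_imp_permutes) (auto simp: \<tau>0_def)
  have sm0: "strict_mono_on {..<k} (\<lambda>i. \<sigma> (l ! (\<tau>0 i)))"
  proof (rule strict_mono_onI)
    fix r s assume rs: "r \<in> {..<k}" "s \<in> {..<k}" "r < s"
    have "m ! r < m ! s" using sm(1) lenm rs unfolding sorted_wrt_iff_nth_less by auto
    thus "\<sigma> (l ! (\<tau>0 r)) < \<sigma> (l ! (\<tau>0 s))" using g\<tau>0 rs unfolding g_def by auto
  qed
  have uniq: "\<tau> = \<tau>0" if "\<tau> permutes {..<k}" "strict_mono_on {..<k} (\<lambda>i. \<sigma> (l ! (\<tau> i)))" for \<tau>
  proof
    fix i
    show "\<tau> i = \<tau>0 i"
    proof (cases "i < k")
      case True
      have img: "(\<lambda>i. g (\<tau> i)) ` {..<k} = Y"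
        proof -
        have "(\<lambda>i. g (\<tau> i)) ` {..<k} = g ` (\<tau> ` {..<k})" by (simp add: image_comp comp_def)
        also have "\<dots> = Y" using bg permutes_image[OF that(1)] by (simp add: bij_betw_def)
        finally show ?thesis .
      qed
      have "g (\<tau> i) = m ! i"
        by (rule strict_mono_on_lessThan_eq[OF _ img lenm sm True]) (use that(2) in \<open>simp add: g_def\<close>)
      hence "g (\<tau> i) = g (\<tau>0 i)" using g\<tau>0 True by simp
      moreover have "\<tau> i \<in> {..<k}" "\<tau>0 i \<in> {..<k}"
        using True permutes_in_image[OF that(1)] permutes_in_image[OF p0] by auto
      ultimately show ?thesis using inj_onD[OF bij_betw_imp_inj_on[OF bg]] by blast
    next
      case False
      then show ?thesis by (simp add: permutes_not_in[OF that(1)] permutes_not_in[OF p0])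
    qed
  qed
  have the: "(THE \<tau>. \<tau> permutes {..<card A} \<and> strict_mono_on {..<card A} (\<lambda>k. \<sigma> (l ! (\<tau> k)))) = \<tau>0"
    unfolding k_def[symmetric] proof (rule the_equality)
    show "\<tau>0 permutes {..<k} \<and> strict_mono_on {..<k} (\<lambda>k. \<sigma> (l ! (\<tau>0 k)))" using p0 sm0 by blast
  qed (use uniq in blast)
  have "sgn_perm A \<sigma> = epsP \<tau>0 {..<k}"
    unfolding sgn_perm_def Let_def l_def[symmetric] the by (rule sign_epsP[OF p0])
  also have "\<dots> = epsP g {..<k}"
  proof -
    define G :: "nat \<times> nat \<Rightarrow> real" where "G = (\<lambda>p. if g (snd p) < g (fst p) then -1 else 1)"
    have "epsP g {..<k} = prod G (Pairs {..<k})" by (simp add: epsP_def G_def)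
    also have "\<dots> = (\<Prod>p\<in>Pairs {..<k}. G (min (\<tau>0 (fst p)) (\<tau>0 (snd p)), max (\<tau>0 (fst p)) (\<tau>0 (snd p))))"
      by (rule prod_Pairs_reindex[OF permutes_imp_bij[OF p0]])
    also have "\<dots> = epsP \<tau>0 {..<k}"
      unfolding epsP_def
    proof (rule prod.cong[OF refl])
      fix p assume "p \<in> Pairs {..<k}"
      then obtain a b where p: "p = (a,b)" "a < b" "b < k" by (auto simp: Pairs_def)
      have "m ! a < m ! b" using sm(1) lenm p unfolding sorted_wrt_iff_nth_less by auto
      hence lt: "g (\<tau>0 a) < g (\<tau>0 b)" using g\<tau>0[of a] g\<tau>0[of b] p by simp
      have "\<tau>0 a \<noteq> \<tau>0 b" using lt by auto
      then show "G (min (\<tau>0 (fst p)) (\<tau>0 (snd p)), max (\<tau>0 (fst p)) (\<tau>0 (snd p))) =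
          (if \<tau>0 (snd p) < \<tau>0 (fst p) then - 1 else 1)"
        using lt p unfolding G_def by (auto simp: min_def max_def)
    qed
    finally show ?thesis by simp
  qed
  also have "\<dots> = epsP \<sigma> A"
  proof -
    define G :: "nat \<times> nat \<Rightarrow> real" where "G = (\<lambda>p. if \<sigma> (snd p) < \<sigma> (fst p) then -1 else 1)"
    have "epsP \<sigma> A = prod G (Pairs A)" by (simp add: epsP_def G_def)
    also have "\<dots> = (\<Prod>p\<in>Pairs {..<k}. G (min (l ! (fst p)) (l ! (snd p)), max (l ! (fst p)) (l ! (snd p))))"
      by (rule prod_Pairs_reindex[OF be])
    also have "\<dots> = epsP g {..<k}"
      unfolding epsP_def
    proof (rule prod.cong[OF refl])
      fix p assume "p \<in> Pairs {..<k}"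
      then obtain a b where p: "p = (a,b)" "a < b" "b < k" by (auto simp: Pairs_def)
      then show "G (min (l ! (fst p)) (l ! (snd p)), max (l ! (fst p)) (l ! (snd p))) =
          (if g (snd p) < g (fst p) then - 1 else 1)"
        using em[of a b] unfolding G_def g_def by (auto simp: min_def max_def)
    qed
    finally show ?thesis by simp
  qed
  finally show ?thesis .
qed


lemma epsP_remove:
  assumes finA: "finite A" and v: "v \<in> A"
  shows "epsP \<sigma> A = epsP \<sigma> (A - {v}) * (-1) ^ card {i\<in>A. i < v \<and> \<sigma> v < \<sigma> i}
                              * (-1) ^ card {j\<in>A. v < j \<and> \<sigma> j < \<sigma> v}"
proof -
  define F :: "nat \<times> nat \<Rightarrow> real" where "F = (\<lambda>p. if \<sigma> (snd p) < \<sigma> (fst p) then -1 else 1)"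
  define L where "L = (\<lambda>i. (i,v)) ` {i\<in>A. i < v}"
  define R where "R = (\<lambda>j. (v,j)) ` {j\<in>A. v < j}"
  have PA: "Pairs A = Pairs (A - {v}) \<union> (L \<union> R)"
    using v by (auto simp: Pairs_def L_def R_def)
  have fP: "finite (Pairs (A - {v}))" using finA by (simp add: finite_Pairs)
  have fL: "finite L" "finite R" using finA by (simp_all add: L_def R_def)
  have d1: "Pairs (A - {v}) \<inter> (L \<union> R) = {}" by (auto simp: Pairs_def L_def R_def)
  have d2: "L \<inter> R = {}" by (auto simp: L_def R_def)
  have "epsP \<sigma> A = prod F (Pairs A)" by (simp add: epsP_def F_def)
  also have "\<dots> = prod F (Pairs (A - {v})) * (prod F L * prod F R)"
    unfolding PA using fP fL d1 d2 by (simp add: prod.union_disjoint)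
  also have "prod F L = (\<Prod>i\<in>{i\<in>A. i < v}. if \<sigma> v < \<sigma> i then -1 else 1)"
    unfolding L_def by (subst prod.reindex) (auto simp: inj_on_def F_def)
  also have "\<dots> = (-1) ^ card {i\<in>{i\<in>A. i < v}. \<sigma> v < \<sigma> i}"
    using finA by (simp add: prod_pm1)
  also have "{i\<in>{i\<in>A. i < v}. \<sigma> v < \<sigma> i} = {i\<in>A. i < v \<and> \<sigma> v < \<sigma> i}" by auto
  also have "prod F R = (\<Prod>j\<in>{j\<in>A. v < j}. if \<sigma> j < \<sigma> v then -1 else 1)"
    unfolding R_def by (subst prod.reindex) (auto simp: inj_on_def F_def)
  also have "\<dots> = (-1) ^ card {j\<in>{j\<in>A. v < j}. \<sigma> j < \<sigma> v}"
    using finA by (simp add: prod_pm1)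
  also have "{j\<in>{j\<in>A. v < j}. \<sigma> j < \<sigma> v} = {j\<in>A. v < j \<and> \<sigma> j < \<sigma> v}" by auto
  also have "prod F (Pairs (A - {v})) = epsP \<sigma> (A - {v})" by (simp add: epsP_def F_def)
  finally show ?thesis by (simp add: mult.assoc)
qed

lemma bd_coeff_image:
  assumes inj: "inj \<sigma>" and fs: "finite s" and ft: "finite t"
  shows "bd_coeff (\<sigma> ` s) (\<sigma> ` t) = sgn_perm s \<sigma> * sgn_perm t \<sigma> * bd_coeff s t"
proof (cases "t \<subseteq> s \<and> card s = Suc (card t)")
  case False
  have "\<not> (\<sigma> ` t \<subseteq> \<sigma> ` s \<and> card (\<sigma> ` s) = Suc (card (\<sigma> ` t)))"
    using False inj by (simp add: inj_image_subset_iff card_image inj_on_subset[OF inj])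
  hence "bd_coeff (\<sigma> ` s) (\<sigma> ` t) = 0" unfolding bd_coeff_def by argo
  moreover have "bd_coeff s t = 0" using False unfolding bd_coeff_def by argo
  ultimately show ?thesis by simp
next
  case True
  have "card (s - t) = 1" using True ft by (simp add: card_Diff_subset)
  then obtain v where stv: "s - t = {v}" by (rule card_1_singletonE)
  have vs: "v \<in> s" and tv: "t = s - {v}" using stv True by auto
  have "\<sigma> ` s - \<sigma> ` t = {\<sigma> v}" using stv inj by (simp add: image_set_diff[symmetric])
  hence the1: "the_elem (\<sigma> ` s - \<sigma> ` t) = \<sigma> v" by simp
  have the0: "the_elem (s - t) = v" using stv by simp
  have True': "\<sigma> ` t \<subseteq> \<sigma> ` s \<and> card (\<sigma> ` s) = Suc (card (\<sigma> ` t))"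
    using True inj by (simp add: image_mono card_image inj_on_subset[OF inj])
  define a where "a = card {i\<in>s. i < v \<and> \<sigma> i < \<sigma> v}"
  define b where "b = card {i\<in>s. i < v \<and> \<sigma> v < \<sigma> i}"
  define c where "c = card {j\<in>s. v < j \<and> \<sigma> j < \<sigma> v}"
  have "{w\<in>\<sigma> ` s. w < \<sigma> v} = \<sigma> ` {j\<in>s. \<sigma> j < \<sigma> v}" by auto
  hence c1: "card {w\<in>\<sigma> ` s. w < \<sigma> v} = card {j\<in>s. \<sigma> j < \<sigma> v}"
    by (simp add: card_image inj_on_subset[OF inj])
  have "{j\<in>s. \<sigma> j < \<sigma> v} = {i\<in>s. i < v \<and> \<sigma> i < \<sigma> v} \<union> {j\<in>s. v < j \<and> \<sigma> j < \<sigma> v}"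
    by (auto simp: linorder_neq_iff) (metis less_irrefl linorder_neqE_nat)
  note e2 = this
  have c2: "card {j\<in>s. \<sigma> j < \<sigma> v} = a + c"
    unfolding e2 a_def c_def using fs by (intro card_Un_disjoint) auto
  have "{i\<in>s. i < v} = {i\<in>s. i < v \<and> \<sigma> i < \<sigma> v} \<union> {i\<in>s. i < v \<and> \<sigma> v < \<sigma> i}"
  proof -
    have "\<sigma> i \<noteq> \<sigma> v" if "i < v" for i using that inj by (auto simp: inj_eq)
    thus ?thesis by (auto simp: linorder_neq_iff)
  qed
  note e3 = this
  have c3: "card {i\<in>s. i < v} = a + b"
    unfolding e3 a_def b_def using fs by (intro card_Un_disjoint) auto
  have sg: "sgn_perm s \<sigma> * sgn_perm t \<sigma> = (-1) ^ (b + c)"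
  proof -
    have "sgn_perm s \<sigma> = epsP \<sigma> s" using fs inj by (simp add: sgn_perm_epsP inj_on_subset[OF inj])
    moreover have "sgn_perm t \<sigma> = epsP \<sigma> t" using ft inj by (simp add: sgn_perm_epsP inj_on_subset[OF inj])
    moreover have "epsP \<sigma> t * epsP \<sigma> t = 1" using ft by (rule epsP_sq)
    ultimately show ?thesis
      using epsP_remove[OF fs vs, of \<sigma>] unfolding tv[symmetric] b_def[symmetric] c_def[symmetric]
      by (simp add: power_add)
  qed
  have "bd_coeff (\<sigma> ` s) (\<sigma> ` t) = (-1) ^ (a + c)"
    unfolding bd_coeff_def using True' the1 c1 c2 by simp
  moreover have "bd_coeff s t = (-1) ^ (a + b)"
    unfolding bd_coeff_def using True the0 c3 by simp
  moreover have "((-1)::real) ^ (a + c) = (-1) ^ (b + c) * (-1) ^ (a + b)"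
  proof -
    have "((-1)::real) ^ (b + c) * (-1) ^ (a + b) = (-1) ^ (a + c) * ((-1) ^ b * (-1) ^ b)"
      by (simp add: power_add)
    also have "((-1)::real) ^ b * (-1) ^ b = 1" by (simp flip: power_add)
    finally show ?thesis by simp
  qed
  ultimately show ?thesis using sg by simp
qed


definition Sk :: "nat set set \<Rightarrow> nat \<Rightarrow> (nat \<Rightarrow> nat) \<Rightarrow> (nat set \<Rightarrow> real) \<Rightarrow> (nat set \<Rightarrow> real)" where
  "Sk X k \<sigma> x = (\<lambda>t. if t \<in> cfaces X k then sgn_perm (inv \<sigma> ` t) \<sigma> * x (inv \<sigma> ` t) else 0)"

lemma sgn_perm_sq: "sgn_perm A \<sigma> * sgn_perm A \<sigma> = 1"
  unfolding sgn_perm_def Let_def sign_def by simp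

lemma sgn_perm_cases: "sgn_perm A \<sigma> = 1 \<or> sgn_perm A \<sigma> = -1"
  unfolding sgn_perm_def Let_def sign_def by simp

locale symcx =
  fixes n :: nat and X :: "nat set set" and \<sigma> :: "nat \<Rightarrow> nat"
  assumes sc: "simplicial_complex n X" and sy: "symmetry n X \<sigma>"
begin

lemma bij\<sigma>: "bij \<sigma>" using sy permutes_bij unfolding symmetry_def by blast

lemma inj\<sigma>: "inj \<sigma>" using bij\<sigma> bij_is_inj by blast

lemma finX: "finite X"
proof -
  have "X \<subseteq> Pow {1..n}" using sc unfolding simplicial_complex_def by auto
  thus ?thesis by (rule finite_subset) simp
qed

lemma fin_face: "s \<in> cfaces X k \<Longrightarrow> finite s"
proof -
  assume "s \<in> cfaces X k"
  hence "s \<subseteq> {1..n}" using sc unfolding simplicial_complex_def cfaces_def by auto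
  thus ?thesis by (rule finite_subset) simp
qed

lemma fin_cf: "finite (cfaces X k)" using finX by (simp add: cfaces_def)

lemma inv_img: "inv \<sigma> ` (\<sigma> ` s) = s" and img_inv: "\<sigma> ` (inv \<sigma> ` t) = t"
  using bij\<sigma> by (simp_all add: image_comp inv_o_cancel[OF inj\<sigma>] surj_iff[THEN iffD1] bij_is_surj)

lemma img_face: "s \<in> cfaces X k \<Longrightarrow> \<sigma> ` s \<in> cfaces X k"
  using sy inj\<sigma> unfolding symmetry_def cfaces_def by (auto simp: card_image inj_on_subset)

lemma bij_faces: "bij_betw ((`) \<sigma>) (cfaces X k) (cfaces X k)"
proof -
  have fin: "finite (cfaces X k)" using finX by (simp add: cfaces_def)
  have inj: "inj_on ((`) \<sigma>) (cfaces X k)"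
    by (rule inj_onI) (metis inv_img)
  have "(`) \<sigma> ` cfaces X k = cfaces X k"
    by (rule endo_inj_surj[OF fin _ inj]) (auto simp: img_face)
  thus ?thesis using inj by (simp add: bij_betw_def)
qed

lemma inv_face: "t \<in> cfaces X k \<Longrightarrow> inv \<sigma> ` t \<in> cfaces X k"
proof -
  assume "t \<in> cfaces X k"
  hence "t \<in> (`) \<sigma> ` cfaces X k" using bij_faces[of k] by (simp add: bij_betw_def)
  then obtain s where "s \<in> cfaces X k" "t = \<sigma> ` s" by blast
  thus ?thesis by (simp add: inv_img)
qed

lemma inv_face_iff: "inv \<sigma> ` t \<in> cfaces X k \<longleftrightarrow> t \<in> cfaces X k"
  using inv_face img_face img_inv by metis

lemma S_map_eq: "S_map X d \<sigma> x = Sk X (d+1) \<sigma> x"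
proof
  fix t
  have "S_map X d \<sigma> x t = (\<Sum>s\<in>cfaces X (d+1). if s = inv \<sigma> ` t then sgn_perm s \<sigma> * x s else 0)"
    unfolding S_map_def by (rule sum.cong[OF refl]) (metis inv_img img_inv)
  also have "\<dots> = Sk X (d+1) \<sigma> x t"
    unfolding Sk_def by (simp add: sum.delta[OF fin_cf] inv_face_iff)
  finally show "S_map X d \<sigma> x t = Sk X (d+1) \<sigma> x t" .
qed

lemma coeff_rel:
  assumes "s \<in> cfaces X k" "t \<in> cfaces X k'"
  shows "bd_coeff (\<sigma> ` s) t = sgn_perm s \<sigma> * sgn_perm (inv \<sigma> ` t) \<sigma> * bd_coeff s (inv \<sigma> ` t)"
  using bd_coeff_image[OF inj\<sigma> fin_face[OF assms(1)] fin_face[OF inv_face[OF assms(2)]]]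
  by (simp add: img_inv)

lemma coeff_rel2:
  assumes "s \<in> cfaces X k" "t \<in> cfaces X k'"
  shows "bd_coeff s (\<sigma> ` t) = sgn_perm (inv \<sigma> ` s) \<sigma> * sgn_perm t \<sigma> * bd_coeff (inv \<sigma> ` s) t"
  using bd_coeff_image[OF inj\<sigma> fin_face[OF inv_face[OF assms(1)]] fin_face[OF assms(2)]]
  by (simp add: img_inv)

lemma bd_S: "bd X m (Sk X (m+1) \<sigma> z) = Sk X m \<sigma> (bd X m z)"
proof
  fix t
  show "bd X m (Sk X (m+1) \<sigma> z) t = Sk X m \<sigma> (bd X m z) t"
  proof (cases "t \<in> cfaces X m")
    case False
    then show ?thesis by (simp add: bd_def Sk_def)
  next
    case True
    define r where "r = inv \<sigma> ` t"
    have r: "r \<in> cfaces X m" using True by (simp add: r_def inv_face)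
    have "bd X m (Sk X (m+1) \<sigma> z) t = (\<Sum>s\<in>cfaces X (m+1). bd_coeff s t * Sk X (m+1) \<sigma> z s)"
      using True by (simp add: bd_def)
    also have "\<dots> = (\<Sum>s\<in>cfaces X (m+1). bd_coeff (\<sigma> ` s) t * Sk X (m+1) \<sigma> z (\<sigma> ` s))"
      by (rule sum.reindex_bij_betw[OF bij_faces, symmetric])
    also have "\<dots> = (\<Sum>s\<in>cfaces X (m+1). sgn_perm r \<sigma> * (bd_coeff s r * z s))"
    proof (rule sum.cong[OF refl])
      fix s assume s: "s \<in> cfaces X (m+1)"
      have "bd_coeff (\<sigma> ` s) t * Sk X (m+1) \<sigma> z (\<sigma> ` s)
          = (sgn_perm s \<sigma> * sgn_perm r \<sigma> * bd_coeff s r) * (sgn_perm s \<sigma> * z s)"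
        using coeff_rel[OF s True] img_face[OF s] by (simp add: Sk_def inv_img r_def)
      also have "\<dots> = (sgn_perm s \<sigma> * sgn_perm s \<sigma>) * (sgn_perm r \<sigma> * (bd_coeff s r * z s))"
        by (simp add: algebra_simps)
      finally show "bd_coeff (\<sigma> ` s) t * Sk X (m+1) \<sigma> z (\<sigma> ` s) = sgn_perm r \<sigma> * (bd_coeff s r * z s)"
        by (simp add: sgn_perm_sq)
    qed
    also have "\<dots> = Sk X m \<sigma> (bd X m z) t"
      using True r by (simp add: Sk_def bd_def r_def[symmetric] sum_distrib_left)
    finally show ?thesis .
  qed
qed

lemma bdT_S: "bdT X m (Sk X m \<sigma> y) = Sk X (m+1) \<sigma> (bdT X m y)"
proof
  fix s
  show "bdT X m (Sk X m \<sigma> y) s = Sk X (m+1) \<sigma> (bdT X m y) s"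
  proof (cases "s \<in> cfaces X (m+1)")
    case False
    then show ?thesis by (simp add: bdT_def Sk_def)
  next
    case True
    define r where "r = inv \<sigma> ` s"
    have r: "r \<in> cfaces X (m+1)" using True by (simp add: r_def inv_face)
    have "bdT X m (Sk X m \<sigma> y) s = (\<Sum>t\<in>cfaces X m. bd_coeff s t * Sk X m \<sigma> y t)"
      using True by (simp add: bdT_def)
    also have "\<dots> = (\<Sum>t\<in>cfaces X m. bd_coeff s (\<sigma> ` t) * Sk X m \<sigma> y (\<sigma> ` t))"
      by (rule sum.reindex_bij_betw[OF bij_faces, symmetric])
    also have "\<dots> = (\<Sum>t\<in>cfaces X m. sgn_perm r \<sigma> * (bd_coeff r t * y t))"
    proof (rule sum.cong[OF refl])
      fix t assume t: "t \<in> cfaces X m"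
      have "bd_coeff s (\<sigma> ` t) * Sk X m \<sigma> y (\<sigma> ` t)
          = (sgn_perm r \<sigma> * sgn_perm t \<sigma> * bd_coeff r t) * (sgn_perm t \<sigma> * y t)"
        using coeff_rel2[OF True t] img_face[OF t] by (simp add: Sk_def inv_img r_def)
      also have "\<dots> = (sgn_perm t \<sigma> * sgn_perm t \<sigma>) * (sgn_perm r \<sigma> * (bd_coeff r t * y t))"
        by (simp add: algebra_simps)
      finally show "bd_coeff s (\<sigma> ` t) * Sk X m \<sigma> y (\<sigma> ` t) = sgn_perm r \<sigma> * (bd_coeff r t * y t)"
        by (simp add: sgn_perm_sq)
    qed
    also have "\<dots> = Sk X (m+1) \<sigma> (bdT X m y) s"
      using True r by (simp add: Sk_def bdT_def r_def[symmetric] sum_distrib_left)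
    finally show ?thesis .
  qed
qed

lemma compwise_S:
  assumes odd: "\<And>u. f (- u) = - f u"
  shows "compwise X k f (Sk X k \<sigma> y) = Sk X k \<sigma> (compwise X k f y)"
proof
  fix t
  have "f (sgn_perm A \<sigma> * u) = sgn_perm A \<sigma> * f u" for A u
    using sgn_perm_cases[of A \<sigma>] odd[of u] by auto
  thus "compwise X k f (Sk X k \<sigma> y) t = Sk X k \<sigma> (compwise X k f y) t"
    by (simp add: compwise_def Sk_def inv_face)
qed

end

theorem mainTheorem3:
  fixes n d :: nat and X :: "nat set set" and \<sigma> :: "nat \<Rightarrow> nat"
    and f g :: "real \<Rightarrow> real"
  assumes "simplicial_complex n X"
    and "symmetry n X \<sigma>"
    and "\<And>u. f (- u) = - f u"
    and "\<And>u. g (- u) = - g u"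
  shows "(\<forall>x\<in>chains X (d+1). G_up X d f (S_map X d \<sigma> x) = S_map X d \<sigma> (G_up X d f x))
       \<and> (\<forall>x\<in>chains X (d+1). G_down X d g (S_map X d \<sigma> x) = S_map X d \<sigma> (G_down X d g x))"
proof -
  interpret symcx n X \<sigma> using assms(1,2) by unfold_locales
  have up: "G_up X d f (S_map X d \<sigma> x) = S_map X d \<sigma> (G_up X d f x)" for x
  proof -
    have "G_up X d f (S_map X d \<sigma> x) = bd X (d+1) (compwise X (d+2) f (bdT X (d+1) (Sk X (d+1) \<sigma> x)))"
      by (simp add: G_up_def S_map_eq)
    also have "bdT X (d+1) (Sk X (d+1) \<sigma> x) = Sk X (d+2) \<sigma> (bdT X (d+1) x)"
      using bdT_S[of "d+1" x] by simp
    also have "compwise X (d+2) f (Sk X (d+2) \<sigma> (bdT X (d+1) x)) = Sk X (d+2) \<sigma> (compwise X (d+2) f (bdT X (d+1) x))"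
      by (rule compwise_S) (rule assms(3))
    also have "bd X (d+1) (Sk X (d+2) \<sigma> (compwise X (d+2) f (bdT X (d+1) x)))
        = Sk X (d+1) \<sigma> (bd X (d+1) (compwise X (d+2) f (bdT X (d+1) x)))"
      using bd_S[of "d+1"] by simp
    finally show ?thesis by (simp add: G_up_def S_map_eq)
  qed
  have down: "G_down X d g (S_map X d \<sigma> x) = S_map X d \<sigma> (G_down X d g x)" for x
  proof -
    have "G_down X d g (S_map X d \<sigma> x) = bdT X d (compwise X d g (bd X d (Sk X (d+1) \<sigma> x)))"
      by (simp add: G_down_def S_map_eq)
    also have "bd X d (Sk X (d+1) \<sigma> x) = Sk X d \<sigma> (bd X d x)"
      by (rule bd_S)
    also have "compwise X d g (Sk X d \<sigma> (bd X d x)) = Sk X d \<sigma> (compwise X d g (bd X d x))"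
      by (rule compwise_S) (rule assms(4))
    also have "bdT X d (Sk X d \<sigma> (compwise X d g (bd X d x))) = Sk X (d+1) \<sigma> (bdT X d (compwise X d g (bd X d x)))"
      by (rule bdT_S)
    finally show ?thesis by (simp add: G_down_def S_map_eq)
  qed
  show ?thesis using up down by blast
qed

end
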